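(* Let $\Gamma$ be an orthosymmetric, convex, compact set and $0<p<1$. If there is a constant $C>0$ with $D(\Gamma,\epsilon)\le C\epsilon^{-p}$ for all $\epsilon\in(0,1]$, then there is a constant $C'>0$ with $D_{\mathsf c}(\Gamma,\epsilon)\le C'\epsilon^{-p/(1-p)}$ for all $\epsilon\in(0,1]$.
   Context: Orthosymmetric: closed under flipping signs of any coordinates. Kolmogorov dimension $D(\Gamma,\epsilon)$: the smallest integer $d$ such that $\inf_{\Pi_d}\sup_{\boldsymbol\theta\in\Gamma}\|\boldsymbol\theta-\Pi_d\boldsymbol\theta\|_2\le\epsilon$ over $d$-dimensional orthogonal projections. Coordinate-wise Kolmogorov dimension $D_{\mathsf c}(\Gamma,\epsilon)$: the smallest integer $d$ such that some set $A$ of $d$ coordinates satisfies $\sup_{\boldsymbol\theta\in\Gamma}\sum_{i\notin A}\theta_i^2\le\epsilon^2$. *)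

theory Defs
  imports "HOL-Analysis.Analysis"
begin

definition ell2 :: "(nat \<Rightarrow> real) set" where
  "ell2 = {x. summable (\<lambda>i. (x i)\<^sup>2)}"

definition l2inner :: "(nat \<Rightarrow> real) \<Rightarrow> (nat \<Rightarrow> real) \<Rightarrow> real" where
  "l2inner x y = (\<Sum>i. x i * y i)"

definition l2norm :: "(nat \<Rightarrow> real) \<Rightarrow> real" where
  "l2norm x = sqrt (\<Sum>i. (x i)\<^sup>2)"

text \<open>Compactness in the l2 norm topology (sequential compactness, which is
  compactness in a metric space).\<close>

definition l2_compact :: "(nat \<Rightarrow> real) set \<Rightarrow> bool" where
  "l2_compact G \<longleftrightarrow> G \<subseteq> ell2 \<and>
     (\<forall>x. (\<forall>k. x k \<in> G) \<longrightarrow>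
        (\<exists>(r::nat \<Rightarrow> nat) t. strict_mono r \<and> t \<in> G \<and>
               (\<lambda>k. l2norm (\<lambda>i. x (r k) i - t i)) \<longlonglongrightarrow> 0))"

definition l2_convex :: "(nat \<Rightarrow> real) set \<Rightarrow> bool" where
  "l2_convex G \<longleftrightarrow> (\<forall>x\<in>G. \<forall>y\<in>G. \<forall>t::real. 0 \<le> t \<and> t \<le> 1 \<longrightarrow>
      (\<lambda>i. t * x i + (1 - t) * y i) \<in> G)"

definition orthosymmetric :: "(nat \<Rightarrow> real) set \<Rightarrow> bool" where
  "orthosymmetric G \<longleftrightarrow> (\<forall>x\<in>G. \<forall>s::nat \<Rightarrow> real. (\<forall>i. s i = 1 \<or> s i = -1) \<longrightarrow>
      (\<lambda>i. s i * x i) \<in> G)"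

text \<open>A d-dimensional orthogonal projection is given by an orthonormal family
  u 0, ..., u (d-1) in l2; it maps x to the sum of <x, u j> u j.\<close>

definition orthonormal_family :: "nat \<Rightarrow> (nat \<Rightarrow> nat \<Rightarrow> real) \<Rightarrow> bool" where
  "orthonormal_family d u \<longleftrightarrow> (\<forall>j<d. u j \<in> ell2) \<and>
     (\<forall>j<d. \<forall>k<d. l2inner (u j) (u k) = (if j = k then 1 else 0))"

definition proj_onto :: "nat \<Rightarrow> (nat \<Rightarrow> nat \<Rightarrow> real) \<Rightarrow> (nat \<Rightarrow> real) \<Rightarrow> (nat \<Rightarrow> real)" where
  "proj_onto d u x = (\<lambda>i. \<Sum>j<d. l2inner x (u j) * u j i)"

definition kolm_width :: "(nat \<Rightarrow> real) set \<Rightarrow> nat \<Rightarrow> ereal" where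
  "kolm_width G d = (INF u \<in> {u. orthonormal_family d u}.
       SUP x \<in> G. ereal (l2norm (\<lambda>i. x i - proj_onto d u x i)))"

definition kolm_dim :: "(nat \<Rightarrow> real) set \<Rightarrow> real \<Rightarrow> nat" where
  "kolm_dim G \<epsilon> = (LEAST d. kolm_width G d \<le> ereal \<epsilon>)"

definition coord_kolm_dim :: "(nat \<Rightarrow> real) set \<Rightarrow> real \<Rightarrow> nat" where
  "coord_kolm_dim G \<epsilon> = (LEAST d. \<exists>A::nat set. finite A \<and> card A = d \<and>
      (SUP x \<in> G. ereal (\<Sum>i. if i \<in> A then 0 else (x i)\<^sup>2)) \<le> ereal (\<epsilon>\<^sup>2))"

end

theory Submission
  imports Defs
begin

lemma ell2_iff: "x \<in> ell2 \<longleftrightarrow> summable (\<lambda>i. (x i)\<^sup>2)"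
  by (simp add: ell2_def)

lemma ell2_add: assumes "x \<in> ell2" "y \<in> ell2" shows "(\<lambda>i. x i + y i) \<in> ell2"
proof -
  have "summable (\<lambda>i. 2 * (x i)\<^sup>2 + 2 * (y i)\<^sup>2)"
    using assms by (intro summable_add summable_mult) (auto simp: ell2_def)
  moreover have "norm ((x i + y i)\<^sup>2) \<le> 2 * (x i)\<^sup>2 + 2 * (y i)\<^sup>2" for i
  proof -
    have "0 \<le> (x i - y i)\<^sup>2" by simp
    then have "(x i + y i)\<^sup>2 \<le> 2 * (x i)\<^sup>2 + 2 * (y i)\<^sup>2" by (simp add: power2_eq_square algebra_simps)
    then show ?thesis by simp
  qed
  ultimately show ?thesis unfolding ell2_iff
    by (rule summable_comparison_test'[where N=0])
qed

lemma ell2_scale: assumes "x \<in> ell2" shows "(\<lambda>i. c * x i) \<in> ell2"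
  using assms summable_mult[of "\<lambda>i. (x i)\<^sup>2" "c^2"] by (simp add: ell2_def power_mult_distrib)

lemma ell2_diff: assumes "x \<in> ell2" "y \<in> ell2" shows "(\<lambda>i. x i - y i) \<in> ell2"
  using ell2_add[OF assms(1) ell2_scale[OF assms(2), of "-1"]] by simp

lemma ell2_lincomb: fixes u :: "nat \<Rightarrow> nat \<Rightarrow> real" and n :: nat assumes "\<forall>j<n. u j \<in> ell2" shows "(\<lambda>i. \<Sum>j<n. c j * u j i) \<in> ell2"
  using assms
proof (induction n)
  case 0 then show ?case by (simp add: ell2_def)
next
  case (Suc n)
  then show ?case using ell2_add[OF Suc.IH ell2_scale[of "u n" "c n"]] by simp
qed

lemma proj_ell2: "orthonormal_family n u \<Longrightarrow> proj_onto n u x \<in> ell2"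
  unfolding proj_onto_def orthonormal_family_def by (rule ell2_lincomb) auto

lemma ell2_finsupp: assumes "finite F" "\<forall>i. i \<notin> F \<longrightarrow> y i = 0" shows "y \<in> ell2"
  unfolding ell2_iff using assms by (intro summable_finite[of F]) auto

lemma l2inner_finsupp: assumes "finite F" "\<forall>i. i \<notin> F \<longrightarrow> y i = 0"
  shows "l2inner y v = (\<Sum>i\<in>F. y i * v i)"
  unfolding l2inner_def using assms by (intro suminf_finite) auto

lemma norm_sq_le_one: assumes "orthonormal_family n u" "j < n" "finite F"
  shows "(\<Sum>i\<in>F. (u j i)\<^sup>2) \<le> 1"
proof -
  have s: "summable (\<lambda>i. (u j i)\<^sup>2)" using assms by (auto simp: orthonormal_family_def ell2_def)
  have "l2inner (u j) (u j) = 1" using assms by (auto simp: orthonormal_family_def)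
  then have "(\<Sum>i. (u j i)\<^sup>2) = 1" by (simp add: l2inner_def power2_eq_square)
  moreover have "(\<Sum>i\<in>F. (u j i)\<^sup>2) \<le> (\<Sum>i. (u j i)\<^sup>2)"
    by (rule sum_le_suminf[OF s assms(3)]) auto
  ultimately show ?thesis by simp
qed

lemma weights_le: assumes "orthonormal_family n u" "finite F"
  shows "(\<Sum>i\<in>F. \<Sum>j<n. (u j i)\<^sup>2) \<le> real n"
proof -
  have "(\<Sum>i\<in>F. \<Sum>j<n. (u j i)\<^sup>2) = (\<Sum>j<n. \<Sum>i\<in>F. (u j i)\<^sup>2)" by (rule sum.swap)
  also have "\<dots> \<le> (\<Sum>j<n. 1)" by (rule sum_mono) (use norm_sq_le_one[OF assms(1) _ assms(2)] in auto)
  finally show ?thesis by simp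
qed


lemma core:
  fixes u :: "nat \<Rightarrow> nat \<Rightarrow> real" and y :: "nat \<Rightarrow> real"
  assumes on: "orthonormal_family n u" and F: "finite F" and supp: "\<forall>i. i \<notin> F \<longrightarrow> y i = 0"
  shows "(\<Sum>i\<in>F. (y i)\<^sup>2) - (\<Sum>j<n. (\<Sum>i\<in>F. y i * u j i)\<^sup>2)
     \<le> l2norm (\<lambda>i. y i - proj_onto n u y i) * sqrt (\<Sum>i\<in>F. (y i)\<^sup>2)"
proof -
  define z where "z = (\<lambda>i. y i - proj_onto n u y i)"
  have yl: "y \<in> ell2" by (rule ell2_finsupp[OF F supp])
  have zl: "z \<in> ell2" unfolding z_def by (rule ell2_diff[OF yl proj_ell2[OF on]])
  define c where "c j = (\<Sum>i\<in>F. y i * u j i)" for j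
  have cj: "l2inner y (u j) = c j" for j unfolding c_def by (rule l2inner_finsupp[OF F supp])
  have zi: "z i = y i - (\<Sum>j<n. c j * u j i)" for i
    unfolding z_def proj_onto_def cj by simp
  have "(\<Sum>i\<in>F. z i * y i) = (\<Sum>i\<in>F. (y i)\<^sup>2) - (\<Sum>i\<in>F. \<Sum>j<n. c j * u j i * y i)"
    by (simp add: zi left_diff_distrib sum_subtractf sum_distrib_right power2_eq_square)
  also have "(\<Sum>i\<in>F. \<Sum>j<n. c j * u j i * y i) = (\<Sum>j<n. \<Sum>i\<in>F. c j * u j i * y i)"
    by (rule sum.swap)
  also have "\<dots> = (\<Sum>j<n. (c j)\<^sup>2)"
    by (simp add: c_def sum_distrib_left power2_eq_square mult_ac)
  finally have eq: "(\<Sum>i\<in>F. z i * y i) = (\<Sum>i\<in>F. (y i)\<^sup>2) - (\<Sum>j<n. (c j)\<^sup>2)" .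
  have "(\<Sum>i\<in>F. z i * y i) \<le> sqrt ((\<Sum>i\<in>F. z i * y i)\<^sup>2)" by simp
  also have "\<dots> \<le> sqrt ((\<Sum>i\<in>F. (z i)\<^sup>2) * (\<Sum>i\<in>F. (y i)\<^sup>2))"
    by (rule real_sqrt_le_mono[OF Cauchy_Schwarz_ineq_sum])
  also have "\<dots> = sqrt (\<Sum>i\<in>F. (z i)\<^sup>2) * sqrt (\<Sum>i\<in>F. (y i)\<^sup>2)" by (simp add: real_sqrt_mult)
  also have "sqrt (\<Sum>i\<in>F. (z i)\<^sup>2) \<le> l2norm z"
    unfolding l2norm_def
    by (rule real_sqrt_le_mono, rule sum_le_suminf) (use zl F in \<open>auto simp: ell2_def\<close>)
  then have "sqrt (\<Sum>i\<in>F. (z i)\<^sup>2) * sqrt (\<Sum>i\<in>F. (y i)\<^sup>2) \<le> l2norm z * sqrt (\<Sum>i\<in>F. (y i)\<^sup>2)"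
    by (rule mult_right_mono) (simp add: sum_nonneg)
  finally show ?thesis using eq unfolding z_def c_def by simp
qed

lemma sign_choice:
  fixes u :: "nat \<Rightarrow> nat \<Rightarrow> real" and th :: "nat \<Rightarrow> real"
  assumes "finite F"
  shows "\<exists>s. (\<forall>i. s i = 1 \<or> s i = -1) \<and>
    (\<Sum>j<n. (\<Sum>i\<in>F. s i * th i * u j i)\<^sup>2) \<le> (\<Sum>i\<in>F. (th i)\<^sup>2 * (\<Sum>j<n. (u j i)\<^sup>2))"
  using assms
proof (induction F rule: finite_induct)
  case empty
  show ?case by (rule exI[of _ "\<lambda>_. 1"]) simp
next
  case (insert k F)
  then obtain s where s: "\<forall>i. s i = 1 \<or> s i = -1"
    and sb: "(\<Sum>j<n. (\<Sum>i\<in>F. s i * th i * u j i)\<^sup>2) \<le> (\<Sum>i\<in>F. (th i)\<^sup>2 * (\<Sum>j<n. (u j i)\<^sup>2))"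
    by blast
  define a where "a j = (\<Sum>i\<in>F. s i * th i * u j i)" for j
  define b where "b j = th k * u j k" for j
  define sg :: real where "sg = (if (\<Sum>j<n. a j * b j) \<le> 0 then 1 else -1)"
  define s' where "s' = s(k := sg)"
  have s'F: "(\<Sum>i\<in>F. s' i * th i * u j i) = a j" for j
    unfolding a_def s'_def using insert by (intro sum.cong) auto
  have sum_ins: "(\<Sum>i\<in>insert k F. s' i * th i * u j i) = a j + sg * b j" for j
    using insert s'F by (simp add: s'_def b_def mult_ac)
  have sg2: "sg * sg = 1" by (simp add: sg_def)
  have cross: "sg * (\<Sum>j<n. a j * b j) \<le> 0" by (simp add: sg_def)
  have "(\<Sum>j<n. (a j + sg * b j)\<^sup>2) = (\<Sum>j<n. (a j)\<^sup>2) + 2 * (sg * (\<Sum>j<n. a j * b j)) + (\<Sum>j<n. (b j)\<^sup>2)"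
  proof -
    have "(a j + sg * b j)\<^sup>2 = (a j)\<^sup>2 + 2 * sg * (a j * b j) + (b j)\<^sup>2" for j
      using sg2 by (simp add: power2_eq_square algebra_simps)
    then show ?thesis by (simp add: sum.distrib sum_distrib_left mult_ac)
  qed
  also have "\<dots> \<le> (\<Sum>j<n. (a j)\<^sup>2) + (\<Sum>j<n. (b j)\<^sup>2)" using cross by simp
  also have "(\<Sum>j<n. (b j)\<^sup>2) = (th k)\<^sup>2 * (\<Sum>j<n. (u j k)\<^sup>2)"
    by (simp add: b_def power_mult_distrib sum_distrib_left)
  finally have "(\<Sum>j<n. (\<Sum>i\<in>insert k F. s' i * th i * u j i)\<^sup>2)
     \<le> (\<Sum>i\<in>insert k F. (th i)\<^sup>2 * (\<Sum>j<n. (u j i)\<^sup>2))"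
    using sb insert unfolding sum_ins a_def by simp
  moreover have "\<forall>i. s' i = 1 \<or> s' i = -1" using s by (simp add: s'_def sg_def)
  ultimately show ?case by blast
qed

lemma restrict_in:
  assumes os: "orthosymmetric G" and cv: "l2_convex G" and x: "x \<in> G"
  shows "(\<lambda>i. if i \<in> F then x i else 0) \<in> G"
proof -
  define s :: "nat \<Rightarrow> real" where "s i = (if i \<in> F then 1 else -1)" for i
  have x': "(\<lambda>i. s i * x i) \<in> G" using os x unfolding orthosymmetric_def s_def by auto
  have "(\<lambda>i. (1/2) * x i + (1 - 1/2) * (s i * x i)) \<in> G"
    using cv[unfolded l2_convex_def, rule_format, OF x x', of "1/2"] by simp
  moreover have "(\<lambda>i. (1/2) * x i + (1 - 1/2) * (s i * x i)) = (\<lambda>i. if i \<in> F then x i else 0)"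
    by (auto simp: s_def)
  ultimately show ?thesis by simp
qed

lemma kolm_lower:
  assumes "\<And>u. orthonormal_family d u \<Longrightarrow> \<exists>x\<in>G. L \<le> l2norm (\<lambda>i. x i - proj_onto d u x i)"
  shows "ereal L \<le> kolm_width G d"
  unfolding kolm_width_def
proof (rule INF_greatest)
  fix u assume "u \<in> {u. orthonormal_family d u}"
  then obtain x where "x \<in> G" "L \<le> l2norm (\<lambda>i. x i - proj_onto d u x i)" using assms by auto
  then show "ereal L \<le> (SUP x\<in>G. ereal (l2norm (\<lambda>i. x i - proj_onto d u x i)))"
    by (intro SUP_upper2[of x]) auto
qed


definition tl2 :: "nat \<Rightarrow> (nat \<Rightarrow> real) \<Rightarrow> real" where
  "tl2 d x = (\<Sum>i. if i < d then 0 else (x i)\<^sup>2)"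

lemma summable_cut: "summable f \<Longrightarrow> summable (\<lambda>i. if i < d then 0 else (f i :: real))"
proof -
  assume s: "summable f"
  have "summable (\<lambda>i. f i - (if i < d then f i else 0))"
    by (rule summable_diff[OF s summable_finite[of "{..<d}"]]) auto
  moreover have "(\<lambda>i. f i - (if i < d then f i else 0)) = (\<lambda>i. if i < d then 0 else f i)" by auto
  ultimately show ?thesis by simp
qed

lemma suminf_cut: assumes s: "summable f"
  shows "(\<Sum>i. if i < d then 0 else (f i :: real)) = suminf f - sum f {..<d}"
proof -
  have sf: "summable (\<lambda>i. if i < d then f i else 0)" by (rule summable_finite[of "{..<d}"]) auto
  have "(\<Sum>i. f i - (if i < d then f i else 0)) = suminf f - (\<Sum>i. (if i < d then f i else 0))"
    by (rule suminf_diff[OF s sf, symmetric])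
  moreover have "(\<Sum>i. (if i < d then f i else 0)) = sum f {..<d}"
    by (subst suminf_finite[of "{..<d}"]) auto
  moreover have "(\<lambda>i. f i - (if i < d then f i else 0)) = (\<lambda>i. if i < d then 0 else f i)" by auto
  ultimately show ?thesis by simp
qed

lemma tl2_lim: "x \<in> ell2 \<Longrightarrow> (\<lambda>d. tl2 d x) \<longlonglongrightarrow> 0"
proof -
  assume "x \<in> ell2"
  then have s: "summable (\<lambda>i. (x i)\<^sup>2)" by (simp add: ell2_def)
  have "(\<lambda>d. (\<Sum>i. (x i)\<^sup>2) - (\<Sum>i<d. (x i)\<^sup>2)) \<longlonglongrightarrow> (\<Sum>i. (x i)\<^sup>2) - (\<Sum>i. (x i)\<^sup>2)"
    by (intro tendsto_diff tendsto_const summable_LIMSEQ[OF s])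
  then show ?thesis unfolding tl2_def suminf_cut[OF s] by simp
qed

lemma tl2_mono: assumes "x \<in> ell2" "d \<le> d'" shows "tl2 d' x \<le> tl2 d x"
  unfolding tl2_def
  by (rule suminf_le) (use assms in \<open>auto intro!: summable_cut simp: ell2_def\<close>)

lemma tl2_bound: assumes x: "x \<in> ell2" and t: "t \<in> ell2"
  shows "tl2 d x \<le> 2 * tl2 d t + 2 * (l2norm (\<lambda>i. x i - t i))\<^sup>2"
proof -
  have xt: "(\<lambda>i. x i - t i) \<in> ell2" by (rule ell2_diff[OF x t])
  have sx: "summable (\<lambda>i. (x i)\<^sup>2)" and st: "summable (\<lambda>i. (t i)\<^sup>2)"
    and sxt: "summable (\<lambda>i. (x i - t i)\<^sup>2)" using x t xt by (auto simp: ell2_def)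
  have n2: "(l2norm (\<lambda>i. x i - t i))\<^sup>2 = (\<Sum>i. (x i - t i)\<^sup>2)"
    unfolding l2norm_def by (rule real_sqrt_pow2) (rule suminf_nonneg[OF sxt], simp)
  have pt: "(if i < d then 0 else (x i)\<^sup>2) \<le> 2 * (if i < d then 0 else (t i)\<^sup>2) + 2 * (x i - t i)\<^sup>2" for i
  proof -
    have "0 \<le> (x i - 2 * t i)\<^sup>2" by simp
    then have "(x i)\<^sup>2 \<le> 2 * (t i)\<^sup>2 + 2 * (x i - t i)\<^sup>2" by (simp add: power2_eq_square algebra_simps)
    then show ?thesis by auto
  qed
  have "tl2 d x \<le> (\<Sum>i. 2 * (if i < d then 0 else (t i)\<^sup>2) + 2 * (x i - t i)\<^sup>2)"
    unfolding tl2_def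
    by (rule suminf_le[OF pt]) (auto intro!: summable_cut summable_add summable_mult sx st sxt)
  also have "\<dots> = 2 * tl2 d t + 2 * (\<Sum>i. (x i - t i)\<^sup>2)"
    unfolding tl2_def
    by (subst suminf_add[symmetric]) (auto intro!: summable_cut summable_mult sx st sxt simp: suminf_mult[OF summable_cut[OF st]] suminf_mult[OF sxt])
  finally show ?thesis using n2 by simp
qed

lemma tail_exists:
  assumes cp: "l2_compact G" and e: "\<eta> > 0"
  shows "\<exists>d. \<forall>x\<in>G. tl2 d x \<le> \<eta>\<^sup>2"
proof (rule ccontr)
  assume "\<not> ?thesis"
  then have "\<forall>d. \<exists>x. x \<in> G \<and> \<eta>\<^sup>2 < tl2 d x" by (auto simp: not_le)
  then obtain X where X: "\<And>d. X d \<in> G" "\<And>d. \<eta>\<^sup>2 < tl2 d (X d)" by metis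
  have Gl: "G \<subseteq> ell2" using cp by (simp add: l2_compact_def)
  obtain r t where r: "strict_mono r" and t: "t \<in> G"
    and lim: "(\<lambda>k. l2norm (\<lambda>i. X (r k) i - t i)) \<longlonglongrightarrow> 0"
    using cp X(1) unfolding l2_compact_def by blast
  have e2: "\<eta>/2 > 0" using e by simp
  obtain K where K: "\<And>k. k \<ge> K \<Longrightarrow> norm (l2norm (\<lambda>i. X (r k) i - t i) - 0) < \<eta>/2"
    using LIMSEQ_D[OF lim e2] by blast
  have e4: "\<eta>\<^sup>2/4 > 0" using e by simp
  obtain D where D: "\<And>d. d \<ge> D \<Longrightarrow> norm (tl2 d t - 0) < \<eta>\<^sup>2/4"
    using LIMSEQ_D[OF tl2_lim[of t] e4] t Gl by blast
  define k where "k = max K D"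
  have rk: "r k \<ge> D" using seq_suble[OF r, of k] by (simp add: k_def)
  have n1: "\<bar>l2norm (\<lambda>i. X (r k) i - t i)\<bar> < \<eta>/2" using K[of k] by (simp add: k_def)
  have "\<bar>l2norm (\<lambda>i. X (r k) i - t i)\<bar>\<^sup>2 < (\<eta>/2)\<^sup>2"
    by (rule power_strict_mono[OF n1]) auto
  then have sq: "(l2norm (\<lambda>i. X (r k) i - t i))\<^sup>2 < (\<eta>/2)\<^sup>2" by simp
  have tt: "tl2 (r k) t < \<eta>\<^sup>2/4" using D[OF rk] by simp
  have "tl2 (r k) (X (r k)) \<le> 2 * tl2 (r k) t + 2 * (l2norm (\<lambda>i. X (r k) i - t i))\<^sup>2"
    using tl2_bound X(1) t Gl by blast
  also have "\<dots> < \<eta>\<^sup>2" using sq tt by (simp add: power_divide)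
  finally show False using X(2)[of "r k"] by simp
qed

definition ebas :: "nat \<Rightarrow> nat \<Rightarrow> real" where "ebas j = (\<lambda>i. if i = j then 1 else 0)"

lemma ebas_inner: "l2inner x (ebas j) = x j"
proof -
  have "l2inner x (ebas j) = (\<Sum>i\<in>{j}. x i * ebas j i)"
    unfolding l2inner_def by (rule suminf_finite) (auto simp: ebas_def)
  then show ?thesis by (simp add: ebas_def)
qed

lemma ebas_on: "orthonormal_family d ebas"
  unfolding orthonormal_family_def
proof (intro conjI allI impI)
  fix j assume "j < d"
  show "ebas j \<in> ell2" by (rule ell2_finsupp[of "{j}"]) (auto simp: ebas_def)
next
  fix j k show "l2inner (ebas j) (ebas k) = (if j = k then 1 else 0)"
    by (simp add: ebas_inner) (simp add: ebas_def)
qed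

lemma width_exists:
  assumes cp: "l2_compact G" and e: "\<eta> > 0"
  shows "\<exists>d. kolm_width G d \<le> ereal \<eta>"
proof -
  obtain d where d: "\<forall>x\<in>G. tl2 d x \<le> \<eta>\<^sup>2" using tail_exists[OF cp e] by blast
  have "(SUP x\<in>G. ereal (l2norm (\<lambda>i. x i - proj_onto d ebas x i))) \<le> ereal \<eta>"
  proof (rule SUP_least)
    fix x assume x: "x \<in> G"
    have pe: "proj_onto d ebas x i = (if i < d then x i else 0)" for i
    proof -
      have "proj_onto d ebas x i = (\<Sum>j<d. x j * ebas j i)" by (simp add: proj_onto_def ebas_inner)
      also have "\<dots> = (\<Sum>j\<in>{..<d} \<inter> {i}. x j)"
        by (rule sum.mono_neutral_cong_right) (auto simp: ebas_def)
      finally show ?thesis by auto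
    qed
    have "(\<lambda>i. (x i - proj_onto d ebas x i)\<^sup>2) = (\<lambda>i. if i < d then 0 else (x i)\<^sup>2)"
      by (auto simp: pe)
    then have "l2norm (\<lambda>i. x i - proj_onto d ebas x i) = sqrt (tl2 d x)"
      by (simp add: l2norm_def tl2_def)
    also have "\<dots> \<le> sqrt (\<eta>\<^sup>2)" using d x real_sqrt_le_mono by blast
    finally show "ereal (l2norm (\<lambda>i. x i - proj_onto d ebas x i)) \<le> ereal \<eta>" using e by simp
  qed
  moreover have "kolm_width G d \<le> (SUP x\<in>G. ereal (l2norm (\<lambda>i. x i - proj_onto d ebas x i)))"
    unfolding kolm_width_def by (rule INF_lower2[of ebas]) (auto simp: ebas_on)
  ultimately show ?thesis by (meson order_trans) 
qed

lemma width_dim: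
  assumes cp: "l2_compact G" and e: "\<eta> > 0"
  shows "kolm_width G (kolm_dim G \<eta>) \<le> ereal \<eta>"
  unfolding kolm_dim_def using width_exists[OF cp e] by (rule LeastI_ex)


lemma card_sub_bound:
  assumes os: "orthosymmetric G" and cv: "l2_convex G" and dp: "\<delta> > 0"
    and wd: "kolm_width G m \<le> ereal (\<delta>/4)"
    and S: "finite S" "S \<subseteq> {i. \<exists>x\<in>G. \<delta> < \<bar>x i\<bar>}"
  shows "3 * card S \<le> 4 * m"
proof (rule ccontr)
  assume "\<not> ?thesis"
  then have big: "4 * m < 3 * card S" by simp
  define N where "N = card S"
  have Npos: "N > 0" using big N_def by simp
  have mN: "real m / real N < 3/4" using big Npos unfolding N_def
    by (simp add: field_simps)
  have "\<forall>i\<in>S. \<exists>x\<in>G. \<delta> < \<bar>x i\<bar>" using S by auto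
  then obtain xi where xi: "\<And>i. i \<in> S \<Longrightarrow> xi i \<in> G \<and> \<delta> < \<bar>xi i i\<bar>" by metis
  define L where "L = \<delta> * (1 - real m / real N)"
  have "ereal L \<le> kolm_width G m"
  proof (rule kolm_lower)
    fix u assume on: "orthonormal_family m u"
    define w where "w i = (\<Sum>j<m. (u j i)\<^sup>2)" for i
    have W: "(\<Sum>i\<in>S. w i) \<le> real m" unfolding w_def by (rule weights_le[OF on S(1)])
    obtain i where iS: "i \<in> S" and wi: "w i \<le> real m / real N"
    proof (rule ccontr)
      assume "\<not> thesis"
      then have "\<forall>i\<in>S. real m / real N < w i" using that by force
      moreover have "S \<noteq> {}" using Npos N_def by auto
      ultimately have "(\<Sum>i\<in>S. real m / real N) < (\<Sum>i\<in>S. w i)"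
        using S(1) by (intro sum_strict_mono) auto
      then show False using W Npos by (simp add: N_def)
    qed
    define c where "c = xi i i"
    define y where "y = (\<lambda>k. if k \<in> {i} then xi i k else 0)"
    have yG: "y \<in> G" unfolding y_def by (rule restrict_in[OF os cv]) (use xi iS in auto)
    have cr: "(\<Sum>k\<in>{i}. (y k)\<^sup>2) - (\<Sum>j<m. (\<Sum>k\<in>{i}. y k * u j k)\<^sup>2)
     \<le> l2norm (\<lambda>k. y k - proj_onto m u y k) * sqrt (\<Sum>k\<in>{i}. (y k)\<^sup>2)"
      by (rule core[OF on]) (auto simp: y_def)
    have "(\<Sum>j<m. (\<Sum>k\<in>{i}. y k * u j k)\<^sup>2) = c\<^sup>2 * w i"
      by (simp add: y_def c_def w_def power_mult_distrib sum_distrib_left)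
    with cr have cr2: "c\<^sup>2 * (1 - w i) \<le> l2norm (\<lambda>k. y k - proj_onto m u y k) * \<bar>c\<bar>"
      by (simp add: y_def c_def algebra_simps)
    have cpos: "\<bar>c\<bar> > \<delta>" using xi iS c_def by auto
    have "\<bar>c\<bar> * (1 - w i) \<le> l2norm (\<lambda>k. y k - proj_onto m u y k)"
    proof -
      have "\<bar>c\<bar> * (\<bar>c\<bar> * (1 - w i)) \<le> \<bar>c\<bar> * l2norm (\<lambda>k. y k - proj_onto m u y k)"
        using cr2 by (simp add: power2_eq_square mult_ac abs_mult_self_eq)
      then show ?thesis using cpos dp by (simp add: mult_le_cancel_left)
    qed
    moreover have "L \<le> \<bar>c\<bar> * (1 - w i)"
    proof -
      have "0 \<le> 1 - real m / real N" using mN by linarith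
      then have "\<delta> * (1 - real m / real N) \<le> \<bar>c\<bar> * (1 - real m / real N)"
        using cpos by (intro mult_right_mono) auto
      also have "\<dots> \<le> \<bar>c\<bar> * (1 - w i)" using wi by (intro mult_left_mono) auto
      finally show ?thesis by (simp add: L_def)
    qed
    ultimately show "\<exists>x\<in>G. L \<le> l2norm (\<lambda>k. x k - proj_onto m u x k)" using yG by force
  qed
  with wd have "L \<le> \<delta>/4" by (metis ereal_less_eq(3) order_trans)
  then have "\<delta> * (1 - real m / real N) \<le> \<delta> * (1/4)" by (simp add: L_def)
  then have "1 - real m / real N \<le> 1/4" using dp mult_le_cancel_left_pos by blast
  then show False using mN by linarith
qed

lemma card_bound:
  assumes os: "orthosymmetric G" and cv: "l2_convex G" and dp: "\<delta> > 0"
    and wd: "kolm_width G m \<le> ereal (\<delta>/4)"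
  shows "finite {i. \<exists>x\<in>G. \<delta> < \<bar>x i\<bar>} \<and> 3 * card {i. \<exists>x\<in>G. \<delta> < \<bar>x i\<bar>} \<le> 4 * m"
proof -
  let ?A = "{i. \<exists>x\<in>G. \<delta> < \<bar>x i\<bar>}"
  have fin: "finite ?A"
  proof (rule ccontr)
    assume "infinite ?A"
    then obtain S where "finite S" "card S = 4 * m + 1" "S \<subseteq> ?A"
      using infinite_arbitrarily_large by blast
    then show False using card_sub_bound[OF os cv dp wd, of S] by simp
  qed
  then show ?thesis using card_sub_bound[OF os cv dp wd fin] by simp
qed

lemma tail_sq_bound:
  assumes os: "orthosymmetric G" and cv: "l2_convex G" and x: "x \<in> G"
    and wd: "kolm_width G n \<le> ereal \<eta>" and eta: "\<eta> \<ge> 0"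
    and F: "finite F" and small: "\<forall>i\<in>F. \<bar>x i\<bar> \<le> \<delta>"
  shows "(\<Sum>i\<in>F. (x i)\<^sup>2) \<le> \<eta> * sqrt (\<Sum>i\<in>F. (x i)\<^sup>2) + real n * \<delta>\<^sup>2"
proof (rule ccontr)
  define R2 where "R2 = (\<Sum>i\<in>F. (x i)\<^sup>2)"
  assume "\<not> ?thesis"
  then have lt: "\<eta> * sqrt R2 + real n * \<delta>\<^sup>2 < R2" unfolding R2_def by simp
  have R0: "0 \<le> R2" unfolding R2_def by (simp add: sum_nonneg)
  have "0 \<le> \<eta> * sqrt R2" using eta R0 by simp
  moreover have "0 \<le> real n * \<delta>\<^sup>2" by simp
  ultimately have Rpos: "0 < R2" using lt by linarith
  have sp: "0 < sqrt R2" using Rpos by simp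
  define L where "L = (R2 - real n * \<delta>\<^sup>2) / sqrt R2"
  have "ereal L \<le> kolm_width G n"
  proof (rule kolm_lower)
    fix u assume on: "orthonormal_family n u"
    obtain s where s: "\<forall>i. s i = 1 \<or> s i = -1"
      and sb: "(\<Sum>j<n. (\<Sum>i\<in>F. s i * x i * u j i)\<^sup>2) \<le> (\<Sum>i\<in>F. (x i)\<^sup>2 * (\<Sum>j<n. (u j i)\<^sup>2))"
      using sign_choice[OF F, where n=n and th=x and u=u] by blast
    define y where "y = (\<lambda>i. s i * (if i \<in> F then x i else 0))"
    have r: "(\<lambda>i. if i \<in> F then x i else 0) \<in> G" by (rule restrict_in[OF os cv x])
    have osd: "\<forall>x\<in>G. \<forall>s::nat \<Rightarrow> real. (\<forall>i. s i = 1 \<or> s i = -1) \<longrightarrow> (\<lambda>i. s i * x i) \<in> G"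
      using os by (simp add: orthosymmetric_def)
    have yG: "y \<in> G" unfolding y_def by (rule osd[rule_format, OF r s[rule_format]])
    have cr: "(\<Sum>i\<in>F. (y i)\<^sup>2) - (\<Sum>j<n. (\<Sum>i\<in>F. y i * u j i)\<^sup>2)
     \<le> l2norm (\<lambda>i. y i - proj_onto n u y i) * sqrt (\<Sum>i\<in>F. (y i)\<^sup>2)"
      by (rule core[OF on F]) (auto simp: y_def)
    have s2: "(s i)\<^sup>2 = 1" for i using s[rule_format, of i] by auto
    have yy: "(\<Sum>i\<in>F. (y i)\<^sup>2) = R2" unfolding R2_def y_def
      by (intro sum.cong) (auto simp: power_mult_distrib s2)
    have "(\<Sum>j<n. (\<Sum>i\<in>F. y i * u j i)\<^sup>2) = (\<Sum>j<n. (\<Sum>i\<in>F. s i * x i * u j i)\<^sup>2)"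
    proof -
      have "(\<Sum>i\<in>F. y i * u j i) = (\<Sum>i\<in>F. s i * x i * u j i)" for j
        unfolding y_def by (rule sum.cong) auto
      then show ?thesis by simp
    qed
    also have "\<dots> \<le> (\<Sum>i\<in>F. (x i)\<^sup>2 * (\<Sum>j<n. (u j i)\<^sup>2))" by (rule sb)
    also have "\<dots> \<le> (\<Sum>i\<in>F. \<delta>\<^sup>2 * (\<Sum>j<n. (u j i)\<^sup>2))"
    proof (rule sum_mono)
      fix i assume "i \<in> F"
      then have "\<bar>x i\<bar> \<le> \<delta>" using small by blast
      then have "\<bar>x i\<bar> \<le> \<bar>\<delta>\<bar>" by linarith
      then have "(x i)\<^sup>2 \<le> \<delta>\<^sup>2" by (simp add: abs_le_square_iff)
      then show "(x i)\<^sup>2 * (\<Sum>j<n. (u j i)\<^sup>2) \<le> \<delta>\<^sup>2 * (\<Sum>j<n. (u j i)\<^sup>2)"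
        by (intro mult_right_mono) (auto simp: sum_nonneg)
    qed
    also have "\<dots> = \<delta>\<^sup>2 * (\<Sum>i\<in>F. (\<Sum>j<n. (u j i)\<^sup>2))" by (simp add: sum_distrib_left)
    also have "\<dots> \<le> \<delta>\<^sup>2 * real n" by (intro mult_left_mono weights_le[OF on F]) auto
    finally have B: "(\<Sum>j<n. (\<Sum>i\<in>F. y i * u j i)\<^sup>2) \<le> real n * \<delta>\<^sup>2" by (simp add: mult_ac)
    have "R2 - real n * \<delta>\<^sup>2 \<le> l2norm (\<lambda>i. y i - proj_onto n u y i) * sqrt R2"
      using cr B unfolding yy by linarith
    then have "L \<le> l2norm (\<lambda>i. y i - proj_onto n u y i)"
      unfolding L_def using sp by (simp add: divide_le_eq)
    then show "\<exists>y\<in>G. L \<le> l2norm (\<lambda>i. y i - proj_onto n u y i)" using yG by blast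
  qed
  with wd have "L \<le> \<eta>" by (metis ereal_less_eq(3) order_trans)
  moreover have "\<eta> < L" unfolding L_def using lt sp
    by (simp add: less_divide_eq)
  ultimately show False by simp
qed


lemma pw_eta: assumes "0 < (e::real)" shows "(e/4) powr (-p) = 4 powr p * e powr (-p)"
proof -
  have "(e/4) powr (-p) = e powr (-p) / 4 powr (-p)" by (rule powr_divide)
  also have "4 powr (-p) = inverse (4 powr p)" by (rule powr_minus)
  finally show ?thesis by (simp only: divide_inverse inverse_inverse_eq mult.commute)
qed

lemma pw_sq: "((e::real) powr q)\<^sup>2 = e powr (2*q)"
proof -
  have "(e powr q)\<^sup>2 = e powr q * e powr q" by (rule power2_eq_square)
  also have "\<dots> = e powr (q + q)" by (rule powr_add[symmetric])
  finally show ?thesis by (simp only: mult_2)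
qed


lemma pw_delta:
  assumes K: "0 \<le> (K::real)"
  shows "(e powr (1 + p/2) / sqrt (2*K+1)) powr (-p) = e powr (-(p + p\<^sup>2/2)) * (2*K+1) powr (p/2)"
proof -
  have s: "sqrt (2*K+1) = (2*K+1) powr (1/2)" by (rule powr_half_sqrt[symmetric]) (use K in simp)
  have e1: "(1 + p/2) * (-p) = -(p + p\<^sup>2/2)" by (simp add: power2_eq_square algebra_simps)
  have e2: "1/2 * (-p) = -(p/2)" by simp
  have e3: "1/2 * p = p/2" by simp
  have "(e powr (1 + p/2) / sqrt (2*K+1)) powr (-p) = (e powr (1 + p/2)) powr (-p) / (sqrt (2*K+1)) powr (-p)"
    by (rule powr_divide)
  also have "(e powr (1 + p/2)) powr (-p) = e powr (-(p + p\<^sup>2/2))"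
    by (simp only: powr_powr e1)
  also have "(sqrt (2*K+1)) powr (-p) = inverse ((2*K+1) powr (p/2))"
    by (simp only: s powr_powr e2 e3 powr_minus)
  finally show ?thesis by (simp only: divide_inverse inverse_inverse_eq)
qed

lemma exp_cmp:
  assumes "0 < p" "p < 1" "0 < (e::real)" "e \<le> 1"
  shows "e powr (-(p + p\<^sup>2/2)) \<le> e powr (- p / (1 - p))"
proof (rule powr_mono')
  have "0 \<le> p * p * p" using assms by simp
  then have "(p + p\<^sup>2/2) * (1 - p) \<le> p" by (simp add: power2_eq_square algebra_simps)
  then have "p + p\<^sup>2/2 \<le> p / (1 - p)" using assms by (simp add: le_divide_eq)
  then show "- p / (1 - p) \<le> - (p + p\<^sup>2/2)" by simp
qed (use assms in auto)


lemma final_tail_ineq: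
  assumes R0: "0 \<le> R2" and e: "0 < (e::real)"
    and b: "R2 \<le> (e/4) * sqrt R2 + e\<^sup>2/2"
  shows "R2 \<le> e\<^sup>2"
proof -
  define r where "r = sqrt R2"
  have r0: "0 \<le> r" unfolding r_def using R0 by simp
  have R2r: "R2 = r * r" unfolding r_def by (metis R0 real_sqrt_mult_self abs_of_nonneg)
  have b': "r * r \<le> (e * r) / 4 + (e * e) / 2"
  proof -
    have "R2 \<le> (e/4) * r + e\<^sup>2/2" using b unfolding r_def .
    then show ?thesis unfolding R2r by (simp add: power2_eq_square)
  qed
  have "r \<le> e"
  proof (rule ccontr)
    assume "\<not> r \<le> e"
    then have re: "e < r" by simp
    have "e * r < r * r" using re r0 e by (intro mult_strict_right_mono) auto
    moreover have "e * e < r * r" using re e by (intro mult_strict_mono) auto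
    moreover have "0 \<le> r * r" by simp
    ultimately show False using b' by linarith
  qed
  then have "r * r \<le> e * e" using r0 by (intro mult_mono) auto
  then show ?thesis using R2r by (simp add: power2_eq_square)
qed

theorem mainTheorem14:
  fixes G :: "(nat \<Rightarrow> real) set" and p C :: real
  assumes "orthosymmetric G" and "l2_convex G" and "l2_compact G"
    and "0 < p" and "p < 1"
    and "C > 0"
    and "\<forall>\<epsilon>. 0 < \<epsilon> \<and> \<epsilon> \<le> 1 \<longrightarrow> real (kolm_dim G \<epsilon>) \<le> C * \<epsilon> powr (-p)"
  shows "\<exists>C'>0. \<forall>\<epsilon>. 0 < \<epsilon> \<and> \<epsilon> \<le> 1 \<longrightarrow>
           real (coord_kolm_dim G \<epsilon>) \<le> C' * \<epsilon> powr (- p / (1 - p))"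
proof -
  note os = assms(1) and cv = assms(2) and cp = assms(3) and hyp = assms(7)
  define K where "K = C * 4 powr p"
  have Kpos: "K > 0" unfolding K_def using assms(6) by (intro mult_pos_pos) auto
  define C' where "C' = 2 * K * (2*K+1) powr (p/2)"
  have C'pos: "C' > 0" unfolding C'_def using Kpos by (intro mult_pos_pos) auto
  have dimb: "real (kolm_dim G (t/4)) \<le> K * t powr (-p)" if "0 < t" "t \<le> 1" for t
  proof -
    have "real (kolm_dim G (t/4)) \<le> C * (t/4) powr (-p)" using hyp that by simp
    also have "\<dots> = K * t powr (-p)" unfolding K_def pw_eta[OF that(1)] by (simp only: mult_ac)
    finally show ?thesis .
  qed
  show ?thesis
  proof (intro exI[of _ C'] conjI allI impI)
    show "C' > 0" by (rule C'pos)
    fix \<epsilon> :: real assume "0 < \<epsilon> \<and> \<epsilon> \<le> 1"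
    then have e0: "0 < \<epsilon>" and e1: "\<epsilon> \<le> 1" by auto
    define \<eta> where "\<eta> = \<epsilon>/4"
    have eta0: "0 < \<eta>" unfolding \<eta>_def using e0 by simp
    define n where "n = kolm_dim G \<eta>"
    have hn: "real n \<le> K * \<epsilon> powr (-p)" unfolding n_def \<eta>_def by (rule dimb[OF e0 e1])
    have wn: "kolm_width G n \<le> ereal \<eta>" unfolding n_def by (rule width_dim[OF cp eta0])
    define \<delta> where "\<delta> = \<epsilon> powr (1 + p/2) / sqrt (2*K+1)"
    have sq1: "1 \<le> sqrt (2*K+1)" using Kpos by simp
    have ep0: "0 < \<epsilon> powr (1 + p/2)" using e0 by simp
    have ep1: "\<epsilon> powr (1 + p/2) \<le> 1" by (rule powr_le1) (use e0 e1 assms(4) in auto)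
    have d0: "0 < \<delta>" unfolding \<delta>_def using ep0 sq1 by simp
    have "\<epsilon> powr (1 + p/2) \<le> sqrt (2*K+1)" using ep1 sq1 by linarith
    then have d1: "\<delta> \<le> 1" unfolding \<delta>_def using sq1 by (simp add: divide_le_eq)
    have dsq: "\<delta>\<^sup>2 = \<epsilon> powr (2 + p) / (2*K+1)"
    proof -
      have "\<delta>\<^sup>2 = (\<epsilon> powr (1 + p/2))\<^sup>2 / (sqrt (2*K+1))\<^sup>2" unfolding \<delta>_def by (rule power_divide)
      also have "(\<epsilon> powr (1 + p/2))\<^sup>2 = \<epsilon> powr (2 * (1 + p/2))" by (rule pw_sq)
      also have "2 * (1 + p/2) = 2 + p" by simp
      also have "(sqrt (2*K+1))\<^sup>2 = 2*K+1" using Kpos by simp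
      finally show ?thesis .
    qed
    have nd: "real n * \<delta>\<^sup>2 \<le> \<epsilon>\<^sup>2/2"
    proof -
      have "real n * \<delta>\<^sup>2 \<le> K * \<epsilon> powr (-p) * \<delta>\<^sup>2" by (rule mult_right_mono[OF hn]) simp
      also have "\<dots> = K * (\<epsilon> powr (-p) * \<epsilon> powr (2 + p)) / (2*K+1)" unfolding dsq by simp
      also have "\<epsilon> powr (-p) * \<epsilon> powr (2 + p) = \<epsilon> powr 2" by (simp only: powr_add[symmetric]) simp
      also have "\<epsilon> powr 2 = \<epsilon>\<^sup>2" using e0 by (simp only: powr_numeral less_imp_le)
      also have "K * \<epsilon>\<^sup>2 / (2*K+1) \<le> \<epsilon>\<^sup>2/2" using Kpos by (simp add: field_simps)
      finally show ?thesis .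
    qed
    define m where "m = kolm_dim G (\<delta>/4)"
    have hm: "real m \<le> K * \<delta> powr (-p)" unfolding m_def by (rule dimb[OF d0 d1])
    have wm: "kolm_width G m \<le> ereal (\<delta>/4)" unfolding m_def by (rule width_dim[OF cp]) (use d0 in simp)
    define A where "A = {i. \<exists>x\<in>G. \<delta> < \<bar>x i\<bar>}"
    have finA: "finite A" and cA: "3 * card A \<le> 4 * m"
      using card_bound[OF os cv d0 wm] unfolding A_def by auto
    have tail: "(\<Sum>i. if i \<in> A then 0 else (x i)\<^sup>2) \<le> \<epsilon>\<^sup>2" if x: "x \<in> G" for x
    proof -
      have xl: "x \<in> ell2" using cp x by (auto simp: l2_compact_def)
      have sx: "summable (\<lambda>i. (x i)\<^sup>2)" using xl by (simp add: ell2_def)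
      have sm: "summable (\<lambda>i. if i \<in> A then 0 else (x i)\<^sup>2)"
        by (rule summable_comparison_test'[OF sx, where N=0]) auto
      show ?thesis
      proof (rule suminf_le_const[OF sm])
        fix k
        define F where "F = {..<k} - A"
        have eq: "(\<Sum>i<k. if i \<in> A then 0 else (x i)\<^sup>2) = (\<Sum>i\<in>F. (x i)\<^sup>2)"
          unfolding F_def by (simp add: sum.If_cases Diff_eq)
        have small: "\<forall>i\<in>F. \<bar>x i\<bar> \<le> \<delta>" unfolding F_def A_def using x by force
        have b: "(\<Sum>i\<in>F. (x i)\<^sup>2) \<le> \<eta> * sqrt (\<Sum>i\<in>F. (x i)\<^sup>2) + real n * \<delta>\<^sup>2"
          by (rule tail_sq_bound[OF os cv x wn _ _ small]) (use eta0 F_def in auto)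
        have "(\<Sum>i\<in>F. (x i)\<^sup>2) \<le> \<epsilon>\<^sup>2"
          by (rule final_tail_ineq[OF _ e0]) (use b nd \<eta>_def in \<open>auto simp: sum_nonneg\<close>)
        then show "(\<Sum>i<k. if i \<in> A then 0 else (x i)\<^sup>2) \<le> \<epsilon>\<^sup>2" using eq by simp
      qed
    qed
    have cd: "coord_kolm_dim G \<epsilon> \<le> card A"
      unfolding coord_kolm_dim_def
    proof (rule Least_le)
      have "(SUP x\<in>G. ereal (\<Sum>i. if i \<in> A then 0 else (x i)\<^sup>2)) \<le> ereal (\<epsilon>\<^sup>2)"
        by (rule SUP_least) (use tail in simp)
      then show "\<exists>A'. finite A' \<and> card A' = card A \<and>
        (SUP x\<in>G. ereal (\<Sum>i. if i \<in> A' then 0 else (x i)\<^sup>2)) \<le> ereal (\<epsilon>\<^sup>2)"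
        using finA by blast
    qed
    have "real (coord_kolm_dim G \<epsilon>) \<le> real (card A)" using cd by simp
    also have "\<dots> \<le> 2 * real m" using cA by simp
    also have "\<dots> \<le> 2 * (K * \<delta> powr (-p))" using hm by simp
    also have "\<delta> powr (-p) = \<epsilon> powr (-(p + p\<^sup>2/2)) * (2*K+1) powr (p/2)"
      unfolding \<delta>_def by (rule pw_delta) (use Kpos in simp)
    also have "2 * (K * (\<epsilon> powr (-(p + p\<^sup>2/2)) * (2*K+1) powr (p/2))) = C' * \<epsilon> powr (-(p + p\<^sup>2/2))"
      unfolding C'_def by (simp only: mult_ac)
    also have "\<dots> \<le> C' * \<epsilon> powr (- p / (1 - p))"
      by (rule mult_left_mono[OF exp_cmp[OF assms(4,5) e0 e1]]) (use C'pos in simp)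
    finally show "real (coord_kolm_dim G \<epsilon>) \<le> C' * \<epsilon> powr (- p / (1 - p))" .
  qed
qed

end
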